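(* For the iterates of SONATA with step-size $\alpha\in(0,1]$ under Assumptions (A), (B), (C), (W), and assuming $D_{\max}>0$, for every $\nu\ge0$: $$\alpha\|d^\nu\|^2\ge\frac{\mu}{D_{\max}^2}\Big(p^{\nu+1}-(1-\alpha)p^\nu-\frac\alpha\mu\|\delta^\nu\|^2\Big).$$
   Context: Problem (P): minimize $U=F+G$ over $\mathcal K$, $F=\frac1m\sum_{i=1}^mf_i$. (A): $\mathcal K\subseteq\mathbb R^d$ nonempty closed convex; $f_i$ twice differentiable convex on open $\mathcal O\supseteq\mathcal K$; $\mu I\preceq\nabla^2F\preceq LI$ on $\mathcal K$ ($\mu>0$, $L<\infty$); $G$ convex on $\mathcal K$; $x^\star$ unique minimizer, $U^\star=U(x^\star)$. (B): connected undirected graph on $\{1,\dots,m\}$, edges $\mathcal E$. (W): $w_{ii}>0$; for $i\ne j$, $w_{ij}>0$ iff $(i,j)\in\mathcal E$, else 0; $W$ doubly stochastic. (C): $\tilde f_i:\mathcal O\times\mathcal O\to\mathbb R$ $C^2$, $\nabla\tilde f_i(x;x)=\nabla f_i(x)$, $\nabla\tilde f_i(\cdot;x)$ Lipschitz, $\tilde f_i(\cdot;x)$ strongly convex on $\mathcal K$ for all $x\in\mathcal K$; constants $D_i^\ell\le D_i^u$ with $D_i^\ell I\preceq\nabla^2\tilde f_i(x;y)-\nabla^2F(x)\preceq D_i^uI$ on $\mathcal K\times\mathcal K$; $D_{\max}=\max_i\max\{|D_i^\ell|,|D_i^u|\}$. SONATA: $x_i^0\in\mathcal K$, $y_i^0=\nabla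 f_i(x_i^0)$; $\hat x_i^\nu=\arg\min_{x_i\in\mathcal K}\tilde f_i(x_i;x_i^\nu)+(y_i^\nu-\nabla f_i(x_i^\nu))^\top(x_i-x_i^\nu)+G(x_i)$; $d_i^\nu=\hat x_i^\nu-x_i^\nu$; $x_i^{\nu+1/2}=x_i^\nu+\alpha d_i^\nu$; $x_i^{\nu+1}=\sum_jw_{ij}x_j^{\nu+1/2}$; $y_i^{\nu+1}=\sum_jw_{ij}(y_j^\nu+\nabla f_j(x_j^{\nu+1})-\nabla f_j(x_j^\nu))$. $d^\nu$ and $\delta^\nu$ stack $d_i^\nu$ and $\delta_i^\nu=\nabla F(x_i^\nu)-y_i^\nu$; $p^\nu=\sum_i(U(x_i^\nu)-U^\star)$. *)

theory Defs
  imports "HOL-Analysis.Analysis"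
begin

definition strongly_convex_on :: "'a::real_normed_vector set \<Rightarrow> ('a \<Rightarrow> real) \<Rightarrow> bool" where
  "strongly_convex_on S f \<longleftrightarrow> (\<exists>c>0. \<forall>x\<in>S. \<forall>y\<in>S. \<forall>t::real. 0 \<le> t \<and> t \<le> 1 \<longrightarrow>
      f (t *\<^sub>R x + (1 - t) *\<^sub>R y) \<le> t * f x + (1 - t) * f y - c / 2 * t * (1 - t) * (norm (x - y))\<^sup>2)"

definition C2_on :: "'b::euclidean_space set \<Rightarrow> ('b \<Rightarrow> real) \<Rightarrow> bool" where
  "C2_on S g \<longleftrightarrow> (\<exists>(g' :: 'b \<Rightarrow> ('b \<Rightarrow>\<^sub>L real)) (g'' :: 'b \<Rightarrow> ('b \<Rightarrow>\<^sub>L ('b \<Rightarrow>\<^sub>L real))).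
      (\<forall>z\<in>S. (g has_derivative blinfun_apply (g' z)) (at z)) \<and>
      (\<forall>z\<in>S. (g' has_derivative blinfun_apply (g'' z)) (at z)) \<and>
      continuous_on S g'')"

end

theory Submission
  imports Defs
begin


lemma line_deriv:
  fixes g :: "'a::real_normed_vector \<Rightarrow> real"
  assumes "(g has_derivative g') (at (a + t *\<^sub>R b))"
  shows "((\<lambda>s. g (a + s *\<^sub>R b)) has_real_derivative g' b) (at t)"
proof -
  have l: "((\<lambda>s. a + s *\<^sub>R b) has_derivative (\<lambda>s. s *\<^sub>R b)) (at t)"
    by (auto intro!: derivative_eq_intros)
  have "((\<lambda>s. g (a + s *\<^sub>R b)) has_derivative (\<lambda>s. g' (s *\<^sub>R b))) (at t)"
    by (rule has_derivative_compose[OF l]) (use assms in simp)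
  moreover have "bounded_linear g'" using assms has_derivative_bounded_linear by blast
  then have "(\<lambda>s. g' (s *\<^sub>R b)) = (*) (g' b)"
    by (auto simp: fun_eq_iff linear_simps(5) dest: bounded_linear.linear)
  ultimately show ?thesis unfolding has_field_derivative_def by simp
qed

lemma deriv_right_lb:
  fixes \<phi> :: "real \<Rightarrow> real"
  assumes d: "(\<phi> has_real_derivative D) (at 0)"
    and h: "\<And>t. 0 < t \<Longrightarrow> t \<le> 1 \<Longrightarrow> \<phi> t - \<phi> 0 \<ge> - t * A"
  shows "D \<ge> - A"
proof -
  have "((\<lambda>y. (\<phi> y - \<phi> 0) / (y - 0)) \<longlongrightarrow> D) (at 0)"
    using d has_field_derivative_iff by blast
  then have lim: "((\<lambda>y. (\<phi> y - \<phi> 0) / (y - 0)) \<longlongrightarrow> D) (at_right 0)"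
    by (rule filterlim_mono) (auto simp: at_le)
  have ev: "eventually (\<lambda>y. - A \<le> (\<phi> y - \<phi> 0) / (y - 0)) (at_right (0::real))"
    unfolding eventually_at_right[OF zero_less_one]
  proof (intro exI[of _ 1] conjI allI impI)
    fix y :: real assume "0 < y" "y < 1"
    then have "- y * A \<le> \<phi> y - \<phi> 0" using h by auto
    then show "- A \<le> (\<phi> y - \<phi> 0) / (y - 0)" using \<open>0 < y\<close>
      by (simp add: field_simps)
  qed simp
  show ?thesis
    by (rule tendsto_lowerbound[OF lim ev]) simp
qed

lemma sc_1d:
  fixes \<phi> \<phi>' \<phi>'' :: "real \<Rightarrow> real"
  assumes d1: "\<And>t. 0 \<le> t \<Longrightarrow> t \<le> 1 \<Longrightarrow> (\<phi> has_real_derivative \<phi>' t) (at t)"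
    and d2: "\<And>t. 0 \<le> t \<Longrightarrow> t \<le> 1 \<Longrightarrow> (\<phi>' has_real_derivative \<phi>'' t) (at t)"
    and k: "\<And>t. 0 \<le> t \<Longrightarrow> t \<le> 1 \<Longrightarrow> \<phi>'' t \<ge> k"
  shows "\<phi> 1 \<ge> \<phi> 0 + \<phi>' 0 + k / 2"
proof -
  have chi: "\<phi>' 0 - k * 0 \<le> \<phi>' t - k * t" if "0 \<le> t" "t \<le> 1" for t
  proof (rule DERIV_nonneg_imp_nondecreasing[OF that(1)])
    fix x assume "0 \<le> x" "x \<le> t"
    then show "\<exists>y. ((\<lambda>t. \<phi>' t - k * t) has_real_derivative y) (at x) \<and> 0 \<le> y"
      using that d2[of x] k[of x]
      by (intro exI[of _ "\<phi>'' x - k"]) (auto intro!: derivative_eq_intros)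
  qed
  have "\<phi> 0 - 0 * \<phi>' 0 - k / 2 * 0\<^sup>2 \<le> \<phi> 1 - 1 * \<phi>' 0 - k / 2 * 1\<^sup>2"
  proof (rule DERIV_nonneg_imp_nondecreasing[of 0 1 "\<lambda>t. \<phi> t - t * \<phi>' 0 - k / 2 * t\<^sup>2"])
    fix x :: real assume x: "0 \<le> x" "x \<le> 1"
    show "\<exists>y. ((\<lambda>t. \<phi> t - t * \<phi>' 0 - k / 2 * t\<^sup>2) has_real_derivative y) (at x) \<and> 0 \<le> y"
      using x d1[of x] chi[of x]
      by (intro exI[of _ "\<phi>' x - \<phi>' 0 - k * x"]) (auto intro!: derivative_eq_intros)
  qed simp
  then show ?thesis by simp
qed

lemma polar0:
  fixes H :: "'a::real_inner \<Rightarrow> 'a"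
  assumes lin: "linear H" and sym: "\<And>u w. u \<bullet> H w = w \<bullet> H u"
    and bd: "\<And>h. \<bar>h \<bullet> H h\<bar> \<le> D * (norm h)\<^sup>2"
  shows "a \<bullet> H b \<le> D / 2 * ((norm a)\<^sup>2 + (norm b)\<^sup>2)"
proof -
  have e1: "(a + b) \<bullet> H (a + b) = a \<bullet> H a + 2 * (a \<bullet> H b) + b \<bullet> H b"
    using sym[of b a] by (simp add: linear_add[OF lin] inner_add_left inner_add_right)
  have e2: "(a - b) \<bullet> H (a - b) = a \<bullet> H a - 2 * (a \<bullet> H b) + b \<bullet> H b"
    using sym[of b a] by (simp add: linear_diff[OF lin] inner_diff_left inner_diff_right)
  have p: "(norm (a + b))\<^sup>2 + (norm (a - b))\<^sup>2 = 2 * ((norm a)\<^sup>2 + (norm b)\<^sup>2)"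
    by (simp add: power2_norm_eq_inner inner_add_left inner_add_right inner_diff_left inner_diff_right inner_commute)
  have "4 * (a \<bullet> H b) = (a + b) \<bullet> H (a + b) - (a - b) \<bullet> H (a - b)" using e1 e2 by simp
  also have "\<dots> \<le> D * (norm (a + b))\<^sup>2 + D * (norm (a - b))\<^sup>2"
    using bd[of "a + b"] bd[of "a - b"] by linarith
  also have "\<dots> = D * ((norm (a + b))\<^sup>2 + (norm (a - b))\<^sup>2)" by (simp add: algebra_simps)
  also have "\<dots> = 2 * D * ((norm a)\<^sup>2 + (norm b)\<^sup>2)" unfolding p by simp
  finally show ?thesis by simp
qed

lemma polar:
  fixes H :: "'a::real_inner \<Rightarrow> 'a"
  assumes lin: "linear H" and sym: "\<And>u w. u \<bullet> H w = w \<bullet> H u"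
    and bd: "\<And>h. \<bar>h \<bullet> H h\<bar> \<le> D * (norm h)\<^sup>2" and s: "0 < s"
  shows "a \<bullet> H b \<le> D / 2 * (s * (norm a)\<^sup>2 + (norm b)\<^sup>2 / s)"
proof -
  have "(sqrt s *\<^sub>R a) \<bullet> H ((1 / sqrt s) *\<^sub>R b) = a \<bullet> H b"
    using s by (simp add: linear_scale[OF lin])
  moreover have "(sqrt s *\<^sub>R a) \<bullet> H ((1 / sqrt s) *\<^sub>R b) \<le> D / 2 * ((norm (sqrt s *\<^sub>R a))\<^sup>2 + (norm ((1 / sqrt s) *\<^sub>R b))\<^sup>2)"
    by (rule polar0[OF lin sym bd])
  moreover have "(norm (sqrt s *\<^sub>R a))\<^sup>2 = s * (norm a)\<^sup>2" "(norm ((1 / sqrt s) *\<^sub>R b))\<^sup>2 = (norm b)\<^sup>2 / s"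
    using s by (simp_all add: power_mult_distrib power_divide)
  ultimately show ?thesis by simp
qed



lemma sym_est:
  fixes q :: "'a::euclidean_space \<Rightarrow> real" and g H :: "'a \<Rightarrow> 'a"
  assumes lin: "linear H" and s: "0 < s" and eps: "0 \<le> \<epsilon>"
   and inO: "\<And>y. norm (y - z) \<le> s * (norm a + norm b) \<Longrightarrow> (q has_derivative (\<lambda>h. g y \<bullet> h)) (at y)"
   and err: "\<And>y. norm (y - z) \<le> s * (norm a + norm b) \<Longrightarrow> norm (g y - g z - H (y - z)) \<le> \<epsilon> * norm (y - z)"
  shows "\<bar>q (z + s *\<^sub>R b + s *\<^sub>R a) - q (z + s *\<^sub>R a) - q (z + s *\<^sub>R b) + q z - s\<^sup>2 * (a \<bullet> H b)\<bar>
     \<le> \<epsilon> * s\<^sup>2 * ((2 * norm a + norm b) * norm a)"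
proof -
  define \<phi> where "\<phi> = (\<lambda>\<tau>. q ((z + s *\<^sub>R b) + \<tau> *\<^sub>R a) - q (z + \<tau> *\<^sub>R a))"
  define \<phi>' where "\<phi>' = (\<lambda>\<tau>. g ((z + s *\<^sub>R b) + \<tau> *\<^sub>R a) \<bullet> a - g (z + \<tau> *\<^sub>R a) \<bullet> a)"
  have nb1: "norm ((z + s *\<^sub>R b + \<tau> *\<^sub>R a) - z) \<le> s * (norm a + norm b)" if "0 \<le> \<tau>" "\<tau> \<le> s" for \<tau>
  proof -
    have "norm ((z + s *\<^sub>R b + \<tau> *\<^sub>R a) - z) = norm (s *\<^sub>R b + \<tau> *\<^sub>R a)" by simp
    also have "\<dots> \<le> s * norm b + \<tau> * norm a" using that s
      by (metis (no_types, lifting) abs_of_nonneg less_eq_real_def norm_scaleR norm_triangle_ineq)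
    also have "\<dots> \<le> s * (norm a + norm b)" using that by (simp add: algebra_simps mult_right_mono)
    finally show ?thesis .
  qed
  have nb2: "norm ((z + \<tau> *\<^sub>R a) - z) \<le> \<tau> * norm a" if "0 \<le> \<tau>" for \<tau>
    using that by simp
  have nb2': "\<tau> * norm a \<le> s * (norm a + norm b)" if "0 \<le> \<tau>" "\<tau> \<le> s" for \<tau>
    using that by (simp add: algebra_simps mult_right_mono add_increasing2)
  have der: "(\<phi> has_real_derivative \<phi>' \<tau>) (at \<tau>)" if "0 \<le> \<tau>" "\<tau> \<le> s" for \<tau>
  proof -
    have d1: "((\<lambda>\<sigma>. q ((z + s *\<^sub>R b) + \<sigma> *\<^sub>R a)) has_real_derivative g ((z + s *\<^sub>R b) + \<tau> *\<^sub>R a) \<bullet> a) (at \<tau>)"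
      by (rule line_deriv[where g'="\<lambda>h. g ((z + s *\<^sub>R b) + \<tau> *\<^sub>R a) \<bullet> h"]) (rule inO, use nb1 that in auto)
    have d2: "((\<lambda>\<sigma>. q (z + \<sigma> *\<^sub>R a)) has_real_derivative g (z + \<tau> *\<^sub>R a) \<bullet> a) (at \<tau>)"
      by (rule line_deriv[where g'="\<lambda>h. g (z + \<tau> *\<^sub>R a) \<bullet> h"]) (rule inO, use nb2[OF that(1)] nb2'[OF that] in linarith)
    show ?thesis unfolding \<phi>_def \<phi>'_def using DERIV_diff[OF d1 d2] by simp
  qed
  obtain \<xi> where \<xi>: "0 < \<xi>" "\<xi> < s" and mv: "\<phi> s - \<phi> 0 = (s - 0) * \<phi>' \<xi>"
    using MVT2[OF s, of \<phi> \<phi>'] der by auto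
  define p1 where "p1 = z + s *\<^sub>R b + \<xi> *\<^sub>R a"
  define p2 where "p2 = z + \<xi> *\<^sub>R a"
  define e1 where "e1 = g p1 - g z - H (p1 - z)"
  define e2 where "e2 = g p2 - g z - H (p2 - z)"
  have "H (p1 - z) - H (p2 - z) = H (s *\<^sub>R b)"
    by (simp add: p1_def p2_def linear_diff[OF lin, symmetric])
  also have "\<dots> = s *\<^sub>R H b" by (simp add: linear_scale[OF lin])
  finally have hd: "H (p1 - z) - H (p2 - z) = s *\<^sub>R H b" .
  have "g p1 - g p2 = e1 - e2 + (H (p1 - z) - H (p2 - z))" by (simp add: e1_def e2_def)
  then have gp: "g p1 - g p2 = e1 - e2 + s *\<^sub>R H b" using hd by simp
  have "\<phi>' \<xi> = (g p1 - g p2) \<bullet> a" by (simp add: \<phi>'_def p1_def p2_def inner_diff_left)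
  also have "\<dots> = e1 \<bullet> a - e2 \<bullet> a + s * (a \<bullet> H b)" by (simp add: gp inner_diff_left inner_add_left inner_commute inner_diff_right inner_add_right)
  finally have ph: "\<phi>' \<xi> - s * (a \<bullet> H b) = e1 \<bullet> a - e2 \<bullet> a" by simp
  have ne1: "norm e1 \<le> \<epsilon> * (s * (norm a + norm b))"
  proof -
    have "norm e1 \<le> \<epsilon> * norm (p1 - z)" unfolding e1_def
      by (rule err) (use nb1[of \<xi>] \<xi> in \<open>simp add: p1_def\<close>)
    also have "\<dots> \<le> \<epsilon> * (s * (norm a + norm b))"
      by (rule mult_left_mono[OF _ eps]) (use nb1[of \<xi>] \<xi> in \<open>simp add: p1_def\<close>)
    finally show ?thesis .
  qed
  have ne2: "norm e2 \<le> \<epsilon> * (s * norm a)"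
  proof -
    have "norm e2 \<le> \<epsilon> * norm (p2 - z)" unfolding e2_def
      by (rule err) (use nb2[of \<xi>] nb2'[of \<xi>] \<xi> in \<open>simp add: p2_def\<close>)
    also have "\<dots> \<le> \<epsilon> * (s * norm a)"
      by (rule mult_left_mono[OF _ eps]) (use \<xi> in \<open>simp add: p2_def mult_right_mono\<close>)
    finally show ?thesis .
  qed
  have "\<bar>e1 \<bullet> a\<bar> \<le> norm e1 * norm a" by (rule Cauchy_Schwarz_ineq2)
  also have "\<dots> \<le> \<epsilon> * (s * (norm a + norm b)) * norm a" by (rule mult_right_mono[OF ne1]) simp
  finally have c1: "\<bar>e1 \<bullet> a\<bar> \<le> \<epsilon> * (s * (norm a + norm b)) * norm a" .
  have "\<bar>e2 \<bullet> a\<bar> \<le> norm e2 * norm a" by (rule Cauchy_Schwarz_ineq2)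
  also have "\<dots> \<le> \<epsilon> * (s * norm a) * norm a" by (rule mult_right_mono[OF ne2]) simp
  finally have c2: "\<bar>e2 \<bullet> a\<bar> \<le> \<epsilon> * (s * norm a) * norm a" .
  have "\<bar>\<phi>' \<xi> - s * (a \<bullet> H b)\<bar> \<le> \<epsilon> * (s * (norm a + norm b)) * norm a + \<epsilon> * (s * norm a) * norm a"
    using ph c1 c2 by linarith
  also have "\<dots> = \<epsilon> * s * ((2 * norm a + norm b) * norm a)" by (simp add: algebra_simps)
  finally have fin: "\<bar>\<phi>' \<xi> - s * (a \<bullet> H b)\<bar> \<le> \<epsilon> * s * ((2 * norm a + norm b) * norm a)" .
  have "q (z + s *\<^sub>R b + s *\<^sub>R a) - q (z + s *\<^sub>R a) - q (z + s *\<^sub>R b) + q z - s\<^sup>2 * (a \<bullet> H b)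
      = s * (\<phi>' \<xi> - s * (a \<bullet> H b))"
    using mv by (simp add: \<phi>_def power2_eq_square algebra_simps)
  then have "\<bar>q (z + s *\<^sub>R b + s *\<^sub>R a) - q (z + s *\<^sub>R a) - q (z + s *\<^sub>R b) + q z - s\<^sup>2 * (a \<bullet> H b)\<bar>
      = s * \<bar>\<phi>' \<xi> - s * (a \<bullet> H b)\<bar>" using s by (simp add: abs_mult)
  also have "\<dots> \<le> s * (\<epsilon> * s * ((2 * norm a + norm b) * norm a))"
    by (rule mult_left_mono[OF fin]) (use s in simp)
  finally show ?thesis by (simp add: power2_eq_square algebra_simps)
qed



lemma hess_sym:
  fixes q :: "'a::euclidean_space \<Rightarrow> real" and g H :: "'a \<Rightarrow> 'a"
  assumes O: "open Os" "z \<in> Os"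
    and dq: "\<And>y. y \<in> Os \<Longrightarrow> (q has_derivative (\<lambda>h. g y \<bullet> h)) (at y)"
    and dg: "(g has_derivative H) (at z)"
  shows "a \<bullet> H b = b \<bullet> H a"
proof -
  have lin: "linear H" using dg has_derivative_bounded_linear bounded_linear.linear by blast
  define C where "C = (2 * norm a + norm b) * norm a + (2 * norm b + norm a) * norm b"
  have C0: "0 \<le> C" unfolding C_def by simp
  have key: "\<bar>a \<bullet> H b - b \<bullet> H a\<bar> \<le> \<epsilon> * C" if e: "0 < \<epsilon>" for \<epsilon>
  proof -
    obtain d where d: "d > 0" and dd: "\<And>y. norm (y - z) < d \<Longrightarrow> norm (g y - g z - H (y - z)) \<le> \<epsilon> * norm (y - z)"
      using dg e unfolding has_derivative_at_alt by blast
    obtain r where r: "r > 0" "ball z r \<subseteq> Os" using O openE by blast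
    define s where "s = min d r / (2 * (norm a + norm b + 1))"
    have s: "0 < s" using d r unfolding s_def by (intro divide_pos_pos) (auto intro!: add_nonneg_pos)
    have sb: "s * (norm a + norm b) < min d r"
    proof -
      have X: "2 * (norm a + norm b + 1) \<noteq> 0" by (metis add_nonneg_pos norm_ge_zero zero_less_one mult_eq_0_iff zero_neq_numeral add_nonneg_nonneg less_irrefl)
      have "s * (norm a + norm b) \<le> s * (norm a + norm b + 1)" using s by simp
      also have "\<dots> = min d r / 2" unfolding s_def using X by (simp only: times_divide_eq_left) (simp add: field_simps)
      also have "\<dots> < min d r" using d r by (simp add: min_def)
      finally show ?thesis .
    qed
    have inO: "(q has_derivative (\<lambda>h. g y \<bullet> h)) (at y)" if "norm (y - z) \<le> s * (norm a + norm b)" for y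
      using that sb r by (intro dq) (auto simp: dist_norm norm_minus_commute subset_iff)
    have err: "norm (g y - g z - H (y - z)) \<le> \<epsilon> * norm (y - z)" if "norm (y - z) \<le> s * (norm a + norm b)" for y
      using that sb by (intro dd) auto
    have inO': "(q has_derivative (\<lambda>h. g y \<bullet> h)) (at y)" if "norm (y - z) \<le> s * (norm b + norm a)" for y
      using inO that by (simp add: add.commute)
    have err': "norm (g y - g z - H (y - z)) \<le> \<epsilon> * norm (y - z)" if "norm (y - z) \<le> s * (norm b + norm a)" for y
      using err that by (simp add: add.commute)
    note E1 = sym_est[OF lin s less_imp_le[OF e] inO err, of a b]
    note E2 = sym_est[OF lin s less_imp_le[OF e] inO' err', of b a]
    have eq: "z + s *\<^sub>R a + s *\<^sub>R b = z + s *\<^sub>R b + s *\<^sub>R a" by (simp add: algebra_simps)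
    have "s\<^sup>2 * \<bar>a \<bullet> H b - b \<bullet> H a\<bar> = \<bar>s\<^sup>2 * (a \<bullet> H b) - s\<^sup>2 * (b \<bullet> H a)\<bar>"
      by (simp add: abs_mult right_diff_distrib[symmetric])
    also have "\<dots> \<le> \<epsilon> * s\<^sup>2 * ((2 * norm a + norm b) * norm a) + \<epsilon> * s\<^sup>2 * ((2 * norm b + norm a) * norm b)"
      using E1 E2 unfolding eq by linarith
    also have "\<dots> = s\<^sup>2 * (\<epsilon> * C)" by (simp add: C_def algebra_simps)
    finally show ?thesis using s by simp
  qed
  show ?thesis
  proof (rule ccontr)
    assume ne: "a \<bullet> H b \<noteq> b \<bullet> H a"
    define x where "x = \<bar>a \<bullet> H b - b \<bullet> H a\<bar>"
    have x0: "0 < x" using ne by (simp add: x_def)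
    have "x \<le> x / (C + 1) * C" using key[of "x / (C + 1)"] x0 C0 by (simp add: x_def)
    also have "\<dots> < x" using x0 C0 by (simp add: field_simps)
    finally show False by simp
  qed
qed



lemma seg_in:
  assumes "convex K" "a \<in> K" "b \<in> K" "0 \<le> t" "t \<le> 1"
  shows "a + t *\<^sub>R (b - a) \<in> K"
proof -
  have "a + t *\<^sub>R (b - a) = (1 - t) *\<^sub>R a + t *\<^sub>R b" by (simp add: algebra_simps)
  then show ?thesis using assms convex_alt by metis
qed

lemma agent:
  fixes F G ftw :: "'a::euclidean_space \<Rightarrow> real" and gF gftw :: "'a \<Rightarrow> 'a"
    and HF Hftw :: "'a \<Rightarrow> 'a \<Rightarrow> 'a"
  assumes Oo: "open Oset" and KO: "K \<subseteq> Oset" and Kc: "convex K"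
    and wK: "w \<in> K" and xhK: "xh \<in> K" and xsK: "xs \<in> K"
    and dF: "\<And>z. z \<in> Oset \<Longrightarrow> (F has_derivative (\<lambda>h. gF z \<bullet> h)) (at z)"
    and dgF: "\<And>z. z \<in> Oset \<Longrightarrow> (gF has_derivative HF z) (at z)"
    and dft: "\<And>z. z \<in> Oset \<Longrightarrow> (ftw has_derivative (\<lambda>h. gftw z \<bullet> h)) (at z)"
    and dgft: "\<And>z. z \<in> Oset \<Longrightarrow> (gftw has_derivative Hftw z) (at z)"
    and hessF: "\<And>z h. z \<in> K \<Longrightarrow> \<mu> * (norm h)\<^sup>2 \<le> h \<bullet> HF z h"
    and Dbd: "\<And>z h. z \<in> K \<Longrightarrow> \<bar>h \<bullet> Hftw z h - h \<bullet> HF z h\<bar> \<le> D * (norm h)\<^sup>2"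
    and cons: "gftw w = gfw"
    and Gc: "convex_on K G"
    and mn: "\<And>z. z \<in> K \<Longrightarrow> ftw xh + (y - gfw) \<bullet> (xh - w) + G xh \<le> ftw z + (y - gfw) \<bullet> (z - w) + G z"
    and mu: "0 < \<mu>" and D: "0 < D"
  shows "F xh + G xh - (F xs + G xs) \<le> (D\<^sup>2 * (norm (xh - w))\<^sup>2 + (norm (gF w - y))\<^sup>2) / \<mu>"
proof -
  define v where "v = xs - xh"
  define d where "d = xh - w"
  define c where "c = y - gfw"
  define \<delta> where "\<delta> = gF w - y"
  have KO': "\<And>z. z \<in> K \<Longrightarrow> z \<in> Oset" using KO by auto
  have VI: "(gftw xh + c) \<bullet> v \<ge> - (G xs - G xh)"
  proof -
    define h where "h = (\<lambda>u. ftw u + c \<bullet> (u - w))"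
    have dh: "(h has_derivative (\<lambda>k. (gftw xh + c) \<bullet> k)) (at xh)"
    proof -
      have "(h has_derivative (\<lambda>k. gftw xh \<bullet> k + c \<bullet> k)) (at xh)"
        unfolding h_def using dft[OF KO'[OF xhK]] by (auto intro!: derivative_eq_intros)
      then show ?thesis by (rule has_derivative_eq_rhs) (simp add: fun_eq_iff inner_add_left)
    qed
    have der: "((\<lambda>t. h (xh + t *\<^sub>R v)) has_real_derivative (gftw xh + c) \<bullet> v) (at 0)"
      using line_deriv[of h "\<lambda>k. (gftw xh + c) \<bullet> k" xh 0 v] dh by simp
    show ?thesis
    proof (rule deriv_right_lb[OF der])
      fix t :: real assume t: "0 < t" "t \<le> 1"
      have zK: "xh + t *\<^sub>R v \<in> K" unfolding v_def by (rule seg_in) (use Kc xhK xsK t in auto)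
      have "h xh + G xh \<le> h (xh + t *\<^sub>R v) + G (xh + t *\<^sub>R v)"
        using mn[OF zK] by (simp add: h_def c_def)
      moreover have "G (xh + t *\<^sub>R v) \<le> (1 - t) * G xh + t * G xs"
      proof -
        have "xh + t *\<^sub>R v = (1 - t) *\<^sub>R xh + t *\<^sub>R xs" by (simp add: v_def algebra_simps)
        then show ?thesis using convex_onD[OF Gc, of t xh xs] t xhK xsK by simp
      qed
      ultimately show "h (xh + t *\<^sub>R v) - h (xh + 0 *\<^sub>R v) \<ge> - t * (G xs - G xh)"
        by (simp add: algebra_simps)
    qed
  qed
  have SC: "F xs \<ge> F xh + gF xh \<bullet> v + \<mu> * (norm v)\<^sup>2 / 2"
  proof -
    define \<phi> where "\<phi> = (\<lambda>t. F (xh + t *\<^sub>R v))"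
    define \<phi>' where "\<phi>' = (\<lambda>t. gF (xh + t *\<^sub>R v) \<bullet> v)"
    define \<phi>'' where "\<phi>'' = (\<lambda>t. HF (xh + t *\<^sub>R v) v \<bullet> v)"
    have pK: "xh + t *\<^sub>R v \<in> K" if "0 \<le> t" "t \<le> 1" for t
      unfolding v_def by (rule seg_in) (use Kc xhK xsK that in auto)
    have "\<phi> 1 \<ge> \<phi> 0 + \<phi>' 0 + \<mu> * (norm v)\<^sup>2 / 2"
    proof (rule sc_1d)
      fix t :: real assume t: "0 \<le> t" "t \<le> 1"
      show "(\<phi> has_real_derivative \<phi>' t) (at t)"
        unfolding \<phi>_def \<phi>'_def by (rule line_deriv[of F "\<lambda>h. gF (xh + t *\<^sub>R v) \<bullet> h"]) (rule dF, use KO' pK t in auto)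
      have "((\<lambda>u. gF u \<bullet> v) has_derivative (\<lambda>k. HF (xh + t *\<^sub>R v) k \<bullet> v)) (at (xh + t *\<^sub>R v))"
        using dgF[OF KO'[OF pK[OF t]]] by (auto intro!: derivative_eq_intros)
      then show "(\<phi>' has_real_derivative \<phi>'' t) (at t)"
        unfolding \<phi>'_def \<phi>''_def by (rule line_deriv)
      show "\<phi>'' t \<ge> \<mu> * (norm v)\<^sup>2"
        using hessF[OF pK[OF t], of v] by (simp add: \<phi>''_def inner_commute)
    qed
    then show ?thesis by (simp add: \<phi>_def \<phi>'_def v_def)
  qed
  define gq where "gq = (\<lambda>u. gftw u - gF u)"
  define Hq where "Hq = (\<lambda>p k. Hftw p k - HF p k)"
  have dgq: "(gq has_derivative Hq p) (at p)" if "p \<in> Oset" for p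
    unfolding gq_def Hq_def using dgft[OF that] dgF[OF that] by (rule has_derivative_diff)
  have MX: "v \<bullet> (gq xh - gq w) \<le> \<mu> / 4 * (norm v)\<^sup>2 + D\<^sup>2 / \<mu> * (norm d)\<^sup>2"
  proof -
    define \<rho> where "\<rho> = (\<lambda>t. v \<bullet> gq (w + t *\<^sub>R d))"
    have pK: "w + t *\<^sub>R d \<in> K" if "0 \<le> t" "t \<le> 1" for t
      unfolding d_def by (rule seg_in) (use Kc xhK wK that in auto)
    have der: "(\<rho> has_real_derivative v \<bullet> Hq (w + t *\<^sub>R d) d) (at t)" if "0 \<le> t" "t \<le> 1" for t
    proof -
      have "((\<lambda>u. v \<bullet> gq u) has_derivative (\<lambda>k. v \<bullet> Hq (w + t *\<^sub>R d) k)) (at (w + t *\<^sub>R d))"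
        using dgq[OF KO'[OF pK[OF that]]] by (auto intro!: derivative_eq_intros)
      then show ?thesis unfolding \<rho>_def by (rule line_deriv)
    qed
    obtain \<xi> where \<xi>: "0 < \<xi>" "\<xi> < 1" and mv: "\<rho> 1 - \<rho> 0 = (1 - 0) * (v \<bullet> Hq (w + \<xi> *\<^sub>R d) d)"
      using MVT2[OF zero_less_one, of \<rho> "\<lambda>t. v \<bullet> Hq (w + t *\<^sub>R d) d"] der by auto
    define p where "p = w + \<xi> *\<^sub>R d"
    have p: "p \<in> K" unfolding p_def using pK \<xi> by auto
    have lin: "linear (Hq p)" using dgq[OF KO'[OF p]] has_derivative_bounded_linear bounded_linear.linear by blast
    have sym: "u \<bullet> Hq p z = z \<bullet> Hq p u" for u z
    proof -
      have s1: "u \<bullet> Hftw p z = z \<bullet> Hftw p u"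
        by (rule hess_sym[OF Oo KO'[OF p] dft dgft[OF KO'[OF p]]])
      have s2: "u \<bullet> HF p z = z \<bullet> HF p u"
        by (rule hess_sym[OF Oo KO'[OF p] dF dgF[OF KO'[OF p]]])
      show ?thesis using s1 s2 by (simp add: Hq_def inner_diff_right)
    qed
    have bd: "\<bar>h \<bullet> Hq p h\<bar> \<le> D * (norm h)\<^sup>2" for h
      using Dbd[OF p, of h] by (simp add: Hq_def inner_diff_right)
    have s: "0 < \<mu> / (2 * D)" using mu D by simp
    have "v \<bullet> Hq p d \<le> D / 2 * (\<mu> / (2 * D) * (norm v)\<^sup>2 + (norm d)\<^sup>2 / (\<mu> / (2 * D)))"
      by (rule polar[OF lin sym bd s])
    also have "\<dots> = \<mu> / 4 * (norm v)\<^sup>2 + D\<^sup>2 / \<mu> * (norm d)\<^sup>2"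
      using mu D by (simp add: field_simps power2_eq_square)
    finally have "v \<bullet> Hq p d \<le> \<mu> / 4 * (norm v)\<^sup>2 + D\<^sup>2 / \<mu> * (norm d)\<^sup>2" .
    moreover have "\<rho> 1 - \<rho> 0 = v \<bullet> (gq xh - gq w)"
      by (simp add: \<rho>_def d_def inner_diff_right)
    ultimately show ?thesis using mv by (simp add: p_def)
  qed
  have idv: "gftw xh + c - gF xh = (gq xh - gq w) - \<delta>"
    by (simp add: gq_def c_def \<delta>_def cons[symmetric])
  have "(gftw xh + c) \<bullet> v - gF xh \<bullet> v = (gq xh - gq w) \<bullet> v - \<delta> \<bullet> v"
    using arg_cong[OF idv, of "\<lambda>u. u \<bullet> v"] by (simp add: inner_diff_left)
  then have eqv: "(gftw xh + c) \<bullet> v - gF xh \<bullet> v = v \<bullet> (gq xh - gq w) - \<delta> \<bullet> v"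
    by (simp add: inner_commute)
  have cs: "- (\<delta> \<bullet> v) \<le> norm \<delta> * norm v"
    using Cauchy_Schwarz_ineq2[of \<delta> v] by linarith
  have am: "norm \<delta> * norm v \<le> \<mu> / 4 * (norm v)\<^sup>2 + (norm \<delta>)\<^sup>2 / \<mu>"
  proof -
    have "0 \<le> (\<mu> / 2 * norm v - norm \<delta>)\<^sup>2" by simp
    then have "0 \<le> \<mu>\<^sup>2 / 4 * (norm v)\<^sup>2 - \<mu> * (norm \<delta> * norm v) + (norm \<delta>)\<^sup>2"
      by (simp add: power2_eq_square algebra_simps)
    then have i1: "\<mu> * (norm \<delta> * norm v) \<le> \<mu>\<^sup>2 / 4 * (norm v)\<^sup>2 + (norm \<delta>)\<^sup>2" by linarith
    have e1: "\<mu> / 4 * (norm v)\<^sup>2 + (norm \<delta>)\<^sup>2 / \<mu> = (\<mu>\<^sup>2 / 4 * (norm v)\<^sup>2 + (norm \<delta>)\<^sup>2) / \<mu>"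
      using mu by (simp add: field_simps power2_eq_square)
    show ?thesis unfolding e1 using i1 mu by (simp add: le_divide_eq mult.commute)
  qed
  have "F xh + G xh - (F xs + G xs) \<le> (gftw xh + c) \<bullet> v - gF xh \<bullet> v - \<mu> * (norm v)\<^sup>2 / 2"
    using VI SC by linarith
  also have "\<dots> \<le> D\<^sup>2 / \<mu> * (norm d)\<^sup>2 + (norm \<delta>)\<^sup>2 / \<mu>"
    using eqv MX cs am by linarith
  also have "\<dots> = (D\<^sup>2 * (norm (xh - w))\<^sup>2 + (norm (gF w - y))\<^sup>2) / \<mu>"
    by (simp add: d_def \<delta>_def add_divide_distrib)
  finally show ?thesis .
qed



theorem lemma3p2:
  fixes m :: nat
    and K Oset :: "'a::euclidean_space set"
    and f :: "nat \<Rightarrow> 'a \<Rightarrow> real" and gf :: "nat \<Rightarrow> 'a \<Rightarrow> 'a" and Hf :: "nat \<Rightarrow> 'a \<Rightarrow> 'a \<Rightarrow> 'a"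
    and G :: "'a \<Rightarrow> real" and \<mu> L :: real and xstar :: 'a
    and E :: "(nat \<times> nat) set" and W :: "nat \<Rightarrow> nat \<Rightarrow> real"
    and ft :: "nat \<Rightarrow> 'a \<Rightarrow> 'a \<Rightarrow> real" and gft :: "nat \<Rightarrow> 'a \<Rightarrow> 'a \<Rightarrow> 'a"
    and Hft :: "nat \<Rightarrow> 'a \<Rightarrow> 'a \<Rightarrow> 'a \<Rightarrow> 'a"
    and Dl Du :: "nat \<Rightarrow> real" and Dmax :: real
    and \<alpha> :: real and x y xhat :: "nat \<Rightarrow> nat \<Rightarrow> 'a"
  assumes m_pos: "0 < m"
    \<comment> \<open>(A)\<close>
    and K_ne: "K \<noteq> {}" and K_closed: "closed K" and K_convex: "convex K"
    and O_open: "open Oset" and K_sub_O: "K \<subseteq> Oset"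
    and f_convex: "\<forall>i<m. convex_on Oset (f i)"
    and f_grad: "\<forall>i<m. \<forall>z\<in>Oset. (f i has_derivative (\<lambda>h. gf i z \<bullet> h)) (at z)"
    and f_hess: "\<forall>i<m. \<forall>z\<in>Oset. (gf i has_derivative Hf i z) (at z)"
    and mu_pos: "0 < \<mu>"
    and hess_bounds: "\<forall>z\<in>K. \<forall>h. \<mu> * (norm h)\<^sup>2 \<le> h \<bullet> ((1 / real m) *\<^sub>R (\<Sum>i<m. Hf i z h))
                          \<and> h \<bullet> ((1 / real m) *\<^sub>R (\<Sum>i<m. Hf i z h)) \<le> L * (norm h)\<^sup>2"
    and G_convex: "convex_on K G"
    and xstar_K: "xstar \<in> K"
    and xstar_unique_min: "\<forall>z\<in>K. z \<noteq> xstar \<longrightarrow>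
          (1 / real m) * (\<Sum>i<m. f i xstar) + G xstar < (1 / real m) * (\<Sum>i<m. f i z) + G z"
    \<comment> \<open>(B)\<close>
    and E_sub: "E \<subseteq> {..<m} \<times> {..<m}" and E_sym: "sym E"
    and E_conn: "\<forall>i<m. \<forall>j<m. (i, j) \<in> E\<^sup>*"
    \<comment> \<open>(W)\<close>
    and W_diag: "\<forall>i<m. 0 < W i i"
    and W_edge: "\<forall>i<m. \<forall>j<m. i \<noteq> j \<longrightarrow> ((i, j) \<in> E \<longrightarrow> 0 < W i j) \<and> ((i, j) \<notin> E \<longrightarrow> W i j = 0)"
    and W_row: "\<forall>i<m. (\<Sum>j<m. W i j) = 1"
    and W_col: "\<forall>j<m. (\<Sum>i<m. W i j) = 1"
    \<comment> \<open>(C)\<close>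
    and ft_C2: "\<forall>i<m. C2_on (Oset \<times> Oset) (\<lambda>p. ft i (fst p) (snd p))"
    and ft_grad: "\<forall>i<m. \<forall>z\<in>Oset. \<forall>w\<in>Oset. ((\<lambda>u. ft i u w) has_derivative (\<lambda>h. gft i z w \<bullet> h)) (at z)"
    and ft_hess: "\<forall>i<m. \<forall>z\<in>Oset. \<forall>w\<in>Oset. ((\<lambda>u. gft i u w) has_derivative Hft i z w) (at z)"
    and ft_consistent: "\<forall>i<m. \<forall>z\<in>K. gft i z z = gf i z"
    and ft_lipschitz: "\<forall>i<m. \<forall>w\<in>K. \<exists>C. C-lipschitz_on K (\<lambda>u. gft i u w)"
    and ft_strongly_convex: "\<forall>i<m. \<forall>w\<in>K. strongly_convex_on K (\<lambda>u. ft i u w)"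
    and D_le: "\<forall>i<m. Dl i \<le> Du i"
    and D_bounds: "\<forall>i<m. \<forall>z\<in>K. \<forall>w\<in>K. \<forall>h.
          Dl i * (norm h)\<^sup>2 \<le> h \<bullet> Hft i z w h - h \<bullet> ((1 / real m) *\<^sub>R (\<Sum>j<m. Hf j z h))
        \<and> h \<bullet> Hft i z w h - h \<bullet> ((1 / real m) *\<^sub>R (\<Sum>j<m. Hf j z h)) \<le> Du i * (norm h)\<^sup>2"
    and Dmax_def: "Dmax = Max ((\<lambda>i. max \<bar>Dl i\<bar> \<bar>Du i\<bar>) ` {..<m})"
    and Dmax_pos: "0 < Dmax"
    \<comment> \<open>SONATA iterates\<close>
    and alpha_pos: "0 < \<alpha>" and alpha_le1: "\<alpha> \<le> 1"
    and x0: "\<forall>i<m. x 0 i \<in> K"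
    and y0: "\<forall>i<m. y 0 i = gf i (x 0 i)"
    and xhat_K: "\<forall>\<nu>. \<forall>i<m. xhat \<nu> i \<in> K"
    and xhat_min: "\<forall>\<nu>. \<forall>i<m. \<forall>z\<in>K.
          ft i (xhat \<nu> i) (x \<nu> i) + (y \<nu> i - gf i (x \<nu> i)) \<bullet> (xhat \<nu> i - x \<nu> i) + G (xhat \<nu> i)
        \<le> ft i z (x \<nu> i) + (y \<nu> i - gf i (x \<nu> i)) \<bullet> (z - x \<nu> i) + G z"
    and x_step: "\<forall>\<nu>. \<forall>i<m. x (Suc \<nu>) i = (\<Sum>j<m. W i j *\<^sub>R (x \<nu> j + \<alpha> *\<^sub>R (xhat \<nu> j - x \<nu> j)))"
    and y_step: "\<forall>\<nu>. \<forall>i<m. y (Suc \<nu>) i = (\<Sum>j<m. W i j *\<^sub>R (y \<nu> j + gf j (x (Suc \<nu>) j) - gf j (x \<nu> j)))"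
  shows "\<forall>\<nu>. \<alpha> * (\<Sum>i<m. (norm (xhat \<nu> i - x \<nu> i))\<^sup>2)
           \<ge> \<mu> / Dmax\<^sup>2 *
             ((\<Sum>i<m. ((1 / real m) * (\<Sum>j<m. f j (x (Suc \<nu>) i)) + G (x (Suc \<nu>) i))
                        - ((1 / real m) * (\<Sum>j<m. f j xstar) + G xstar))
              - (1 - \<alpha>) * (\<Sum>i<m. ((1 / real m) * (\<Sum>j<m. f j (x \<nu> i)) + G (x \<nu> i))
                        - ((1 / real m) * (\<Sum>j<m. f j xstar) + G xstar))
              - \<alpha> / \<mu> * (\<Sum>i<m. (norm ((1 / real m) *\<^sub>R (\<Sum>j<m. gf j (x \<nu> i)) - y \<nu> i))\<^sup>2))"
proof -
  define F where "F = (\<lambda>z. (1 / real m) * (\<Sum>j<m. f j z))"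
  define gF where "gF = (\<lambda>z. (1 / real m) *\<^sub>R (\<Sum>j<m. gf j z))"
  define HF where "HF = (\<lambda>z h. (1 / real m) *\<^sub>R (\<Sum>j<m. Hf j z h))"
  define U where "U = (\<lambda>z. F z + G z)"
  have KO': "\<And>z. z \<in> K \<Longrightarrow> z \<in> Oset" using K_sub_O by auto
  have dF: "(F has_derivative (\<lambda>h. gF z \<bullet> h)) (at z)" if "z \<in> Oset" for z
  proof -
    have "(F has_derivative (\<lambda>h. (1 / real m) * (\<Sum>j<m. gf j z \<bullet> h))) (at z)"
      unfolding F_def using f_grad that m_pos by (auto intro!: derivative_eq_intros)
    then show ?thesis by (rule has_derivative_eq_rhs) (simp add: gF_def fun_eq_iff inner_sum_left)
  qed
  have dgF: "(gF has_derivative HF z) (at z)" if "z \<in> Oset" for z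
  proof -
    have "(gF has_derivative (\<lambda>h. (1 / real m) *\<^sub>R (\<Sum>j<m. Hf j z h))) (at z)"
      unfolding gF_def using f_hess that m_pos by (auto intro!: derivative_eq_intros)
    then show ?thesis by (simp add: HF_def)
  qed
  have Wnn: "0 \<le> W i j" if "i < m" "j < m" for i j
    using W_diag W_edge that by (cases "i = j"; cases "(i, j) \<in> E") (auto intro: less_imp_le)
  have xK: "\<forall>i<m. x \<nu> i \<in> K" for \<nu>
  proof (induction \<nu>)
    case 0 then show ?case using x0 by simp
  next
    case (Suc \<nu>)
    show ?case
    proof (intro allI impI)
      fix i assume i: "i < m"
      have "(\<Sum>j<m. W i j *\<^sub>R (x \<nu> j + \<alpha> *\<^sub>R (xhat \<nu> j - x \<nu> j))) \<in> K"
      proof (rule convex_sum[OF _ K_convex])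
        show "(\<Sum>j<m. W i j) = 1" using W_row i by simp
        show "\<And>j. j \<in> {..<m} \<Longrightarrow> 0 \<le> W i j" using Wnn i by simp
        show "\<And>j. j \<in> {..<m} \<Longrightarrow> x \<nu> j + \<alpha> *\<^sub>R (xhat \<nu> j - x \<nu> j) \<in> K"
          using seg_in[OF K_convex] Suc xhat_K alpha_pos alpha_le1 by simp
      qed simp
      then show "x (Suc \<nu>) i \<in> K" using x_step i by simp
    qed
  qed
  have Dm: "\<bar>Dl i\<bar> \<le> Dmax \<and> \<bar>Du i\<bar> \<le> Dmax" if "i < m" for i
  proof -
    have "max \<bar>Dl i\<bar> \<bar>Du i\<bar> \<le> Dmax" unfolding Dmax_def using that by (intro Max_ge) auto
    then show ?thesis by simp
  qed
  have agent_b: "U (xhat \<nu> i) - U xstar \<le> (Dmax\<^sup>2 * (norm (xhat \<nu> i - x \<nu> i))\<^sup>2 + (norm (gF (x \<nu> i) - y \<nu> i))\<^sup>2) / \<mu>"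
    if i: "i < m" for \<nu> i
  proof -
    have wK: "x \<nu> i \<in> K" using xK i by simp
    show ?thesis unfolding U_def
    proof (rule agent[OF O_open K_sub_O K_convex wK _ xstar_K dF dgF])
      show "xhat \<nu> i \<in> K" using xhat_K i by simp
      show "\<And>z. z \<in> Oset \<Longrightarrow> ((\<lambda>u. ft i u (x \<nu> i)) has_derivative (\<lambda>h. gft i z (x \<nu> i) \<bullet> h)) (at z)"
        using ft_grad i KO'[OF wK] by simp
      show "\<And>z. z \<in> Oset \<Longrightarrow> ((\<lambda>u. gft i u (x \<nu> i)) has_derivative Hft i z (x \<nu> i)) (at z)"
        using ft_hess i KO'[OF wK] by simp
      show "\<And>z h. z \<in> K \<Longrightarrow> \<mu> * (norm h)\<^sup>2 \<le> h \<bullet> HF z h"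
        using hess_bounds by (simp add: HF_def)
      show "\<And>z h. z \<in> K \<Longrightarrow> \<bar>h \<bullet> Hft i z (x \<nu> i) h - h \<bullet> HF z h\<bar> \<le> Dmax * (norm h)\<^sup>2"
      proof -
        fix z h assume z: "z \<in> K"
        have b: "Dl i * (norm h)\<^sup>2 \<le> h \<bullet> Hft i z (x \<nu> i) h - h \<bullet> HF z h"
             "h \<bullet> Hft i z (x \<nu> i) h - h \<bullet> HF z h \<le> Du i * (norm h)\<^sup>2"
          using D_bounds i z wK by (auto simp: HF_def)
        have "- Dmax * (norm h)\<^sup>2 \<le> Dl i * (norm h)\<^sup>2" using Dm[OF i] by (intro mult_right_mono) auto
        moreover have "Du i * (norm h)\<^sup>2 \<le> Dmax * (norm h)\<^sup>2" using Dm[OF i] by (intro mult_right_mono) auto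
        ultimately show "\<bar>h \<bullet> Hft i z (x \<nu> i) h - h \<bullet> HF z h\<bar> \<le> Dmax * (norm h)\<^sup>2" using b by linarith
      qed
      show "gft i (x \<nu> i) (x \<nu> i) = gf i (x \<nu> i)" using ft_consistent i wK by simp
      show "convex_on K G" by (rule G_convex)
      show "\<And>z. z \<in> K \<Longrightarrow> ft i (xhat \<nu> i) (x \<nu> i) + (y \<nu> i - gf i (x \<nu> i)) \<bullet> (xhat \<nu> i - x \<nu> i) + G (xhat \<nu> i)
            \<le> ft i z (x \<nu> i) + (y \<nu> i - gf i (x \<nu> i)) \<bullet> (z - x \<nu> i) + G z"
        using xhat_min i by simp
    qed (use mu_pos Dmax_pos in auto)
  qed
  have fconv: "convex_on K (f j)" if "j < m" for j
    using convex_on_subset[OF _ K_sub_O K_convex] f_convex that by blast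
  have sconv: "convex_on K (\<lambda>z. \<Sum>j<m. f j z)"
  proof (rule convex_onI[OF _ K_convex])
    fix t :: real and a b assume t: "0 < t" "t < 1" and ab: "a \<in> K" "b \<in> K"
    have "(\<Sum>j<m. f j ((1 - t) *\<^sub>R a + t *\<^sub>R b)) \<le> (\<Sum>j<m. (1 - t) * f j a + t * f j b)"
      by (rule sum_mono) (use convex_onD[OF fconv] t ab in auto)
    also have "\<dots> = (1 - t) * (\<Sum>j<m. f j a) + t * (\<Sum>j<m. f j b)"
      by (simp add: sum.distrib sum_distrib_left)
    finally show "(\<Sum>j<m. f j ((1 - t) *\<^sub>R a + t *\<^sub>R b)) \<le> (1 - t) * (\<Sum>j<m. f j a) + t * (\<Sum>j<m. f j b)" .
  qed
  have convU: "convex_on K U"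
    unfolding U_def F_def by (intro convex_on_add convex_on_cmul sconv G_convex) simp
  show ?thesis
  proof (intro allI)
    fix \<nu>
    define xm where "xm = (\<lambda>j. x \<nu> j + \<alpha> *\<^sub>R (xhat \<nu> j - x \<nu> j))"
    have xmK: "xm j \<in> K" if "j < m" for j
      unfolding xm_def using seg_in[OF K_convex] xK xhat_K alpha_pos alpha_le1 that by simp
    have J1: "U (x (Suc \<nu>) i) \<le> (\<Sum>j<m. W i j * U (xm j))" if i: "i < m" for i
    proof -
      have "U (\<Sum>j\<in>{..<m}. W i j *\<^sub>R xm j) \<le> (\<Sum>j\<in>{..<m}. W i j * U (xm j))"
        by (rule convex_on_sum[OF _ _ convU]) (use m_pos W_row i Wnn xmK in auto)
      then show ?thesis using x_step i by (simp add: xm_def)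
    qed
    have J2: "U (xm j) \<le> (1 - \<alpha>) * U (x \<nu> j) + \<alpha> * U (xhat \<nu> j)" if j: "j < m" for j
    proof -
      have "xm j = (1 - \<alpha>) *\<^sub>R x \<nu> j + \<alpha> *\<^sub>R xhat \<nu> j" by (simp add: xm_def algebra_simps)
      then show ?thesis using convex_onD[OF convU, of \<alpha> "x \<nu> j" "xhat \<nu> j"] alpha_pos alpha_le1 xK xhat_K j by simp
    qed
    have S1: "(\<Sum>i<m. U (x (Suc \<nu>) i)) \<le> (\<Sum>j<m. U (xm j))"
    proof -
      have "(\<Sum>i<m. U (x (Suc \<nu>) i)) \<le> (\<Sum>i<m. \<Sum>j<m. W i j * U (xm j))"
        by (rule sum_mono) (use J1 in auto)
      also have "\<dots> = (\<Sum>j<m. (\<Sum>i<m. W i j) * U (xm j))"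
        by (subst sum.swap) (simp add: sum_distrib_right)
      also have "\<dots> = (\<Sum>j<m. U (xm j))" using W_col by simp
      finally show ?thesis .
    qed
    have S2: "(\<Sum>j<m. U (xm j)) \<le> (\<Sum>j<m. (1 - \<alpha>) * U (x \<nu> j) + \<alpha> * U (xhat \<nu> j))"
      by (rule sum_mono) (use J2 in auto)
    define Sd where "Sd = (\<Sum>i<m. (norm (xhat \<nu> i - x \<nu> i))\<^sup>2)"
    define Sdl where "Sdl = (\<Sum>i<m. (norm (gF (x \<nu> i) - y \<nu> i))\<^sup>2)"
    define P1 where "P1 = (\<Sum>i<m. U (x (Suc \<nu>) i) - U xstar)"
    define P0 where "P0 = (\<Sum>i<m. U (x \<nu> i) - U xstar)"
    define Q where "Q = (\<Sum>i<m. U (xhat \<nu> i) - U xstar)"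
    have P1le: "P1 \<le> (1 - \<alpha>) * P0 + \<alpha> * Q"
    proof -
      define A1 where "A1 = (\<Sum>i<m. U (x (Suc \<nu>) i))"
      define AX where "AX = (\<Sum>i<m. U (x \<nu> i))"
      define AH where "AH = (\<Sum>i<m. U (xhat \<nu> i))"
      have e1: "P1 = A1 - real m * U xstar" by (simp add: P1_def A1_def sum_subtractf)
      have e2: "P0 = AX - real m * U xstar" by (simp add: P0_def AX_def sum_subtractf)
      have e3: "Q = AH - real m * U xstar" by (simp add: Q_def AH_def sum_subtractf)
      have e4: "(\<Sum>j<m. (1 - \<alpha>) * U (x \<nu> j) + \<alpha> * U (xhat \<nu> j)) = (1 - \<alpha>) * AX + \<alpha> * AH"
        by (simp add: sum.distrib sum_distrib_left AX_def AH_def)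
      have "A1 \<le> (1 - \<alpha>) * AX + \<alpha> * AH" using S1 S2 e4 unfolding A1_def by linarith
      moreover have "(1 - \<alpha>) * P0 + \<alpha> * Q = (1 - \<alpha>) * AX + \<alpha> * AH - real m * U xstar"
        unfolding e2 e3 by (simp add: algebra_simps)
      ultimately show ?thesis using e1 by linarith
    qed
    have Qle: "Q \<le> (Dmax\<^sup>2 * Sd + Sdl) / \<mu>"
    proof -
      have "Q \<le> (\<Sum>i<m. (Dmax\<^sup>2 * (norm (xhat \<nu> i - x \<nu> i))\<^sup>2 + (norm (gF (x \<nu> i) - y \<nu> i))\<^sup>2) / \<mu>)"
        unfolding Q_def by (rule sum_mono) (use agent_b in auto)
      also have "\<dots> = (Dmax\<^sup>2 * Sd + Sdl) / \<mu>"
        by (simp add: Sd_def Sdl_def sum_divide_distrib[symmetric] sum.distrib sum_distrib_left)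
      finally show ?thesis .
    qed
    have "P1 - (1 - \<alpha>) * P0 - \<alpha> / \<mu> * Sdl \<le> \<alpha> * Dmax\<^sup>2 / \<mu> * Sd"
    proof -
      have "\<alpha> * Q \<le> \<alpha> * ((Dmax\<^sup>2 * Sd + Sdl) / \<mu>)" using Qle alpha_pos by (intro mult_left_mono) auto
      also have "\<dots> = \<alpha> * Dmax\<^sup>2 / \<mu> * Sd + \<alpha> / \<mu> * Sdl" by (simp add: add_divide_distrib distrib_left)
      finally show ?thesis using P1le by linarith
    qed
    then have "\<mu> / Dmax\<^sup>2 * (P1 - (1 - \<alpha>) * P0 - \<alpha> / \<mu> * Sdl) \<le> \<mu> / Dmax\<^sup>2 * (\<alpha> * Dmax\<^sup>2 / \<mu> * Sd)"
      using mu_pos Dmax_pos by (intro mult_left_mono) auto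
    also have "\<dots> = \<alpha> * Sd" using mu_pos Dmax_pos by (simp add: field_simps)
    finally have fin: "\<mu> / Dmax\<^sup>2 * (P1 - (1 - \<alpha>) * P0 - \<alpha> / \<mu> * Sdl) \<le> \<alpha> * Sd" .
    show "\<alpha> * (\<Sum>i<m. (norm (xhat \<nu> i - x \<nu> i))\<^sup>2)
           \<ge> \<mu> / Dmax\<^sup>2 *
             ((\<Sum>i<m. ((1 / real m) * (\<Sum>j<m. f j (x (Suc \<nu>) i)) + G (x (Suc \<nu>) i))
                        - ((1 / real m) * (\<Sum>j<m. f j xstar) + G xstar))
              - (1 - \<alpha>) * (\<Sum>i<m. ((1 / real m) * (\<Sum>j<m. f j (x \<nu> i)) + G (x \<nu> i))
                        - ((1 / real m) * (\<Sum>j<m. f j xstar) + G xstar))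
              - \<alpha> / \<mu> * (\<Sum>i<m. (norm ((1 / real m) *\<^sub>R (\<Sum>j<m. gf j (x \<nu> i)) - y \<nu> i))\<^sup>2))"
      using fin by (simp add: P1_def P0_def Sdl_def Sd_def U_def F_def gF_def)
  qed
qed

end
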